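(* Let $\|\cdot\|$ be a norm on $\mathbb{R}^d$, let $\mathbf{X}_1,\dots,\mathbf{X}_n$ be i.i.d. random vectors in $\mathbb{R}^d$ with parent vector $\mathbf{X}$ such that the cdf of $\|\mathbf{X}\|$ is absolutely continuous, and let $\mathbf{X}_{(1)},\dots,\mathbf{X}_{(n)}$ be their order statistics with respect to the norm. Then, for $y>0$, $$\mathcal{L}\big(\mathbf{X}_{(1)},\dots,\mathbf{X}_{(n-1)},\mathbf{X}_{(n)}\mid\|\mathbf{X}_{(n)}\|=y\big)=\mathcal{L}\big(\mathbf{Y}_{(1)},\dots,\mathbf{Y}_{(n-1)}\big)\times\mathcal{L}\big(\mathring{\mathbf{X}}_y\big),$$ i.e. conditionally on $\{\|\mathbf{X}_{(n)}\|=y\}$, the vector $(\mathbf{X}_{(1)},\dots,\mathbf{X}_{(n-1)})$ has the law of the norm-ordered statistics of $n-1$ i.i.d. random vectors $\mathbf{Y}_1,\dots,\mathbf{Y}_{n-1}$ with the truncated distribution $F_{\mathbf{X}|\|\mathbf{X}\|}(\cdot\,|\,y)$, and $\mathbf{X}_{(n)}$ is independent of it and has the law of $\mathring{\mathbf{X}}_y$.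
   Context: The norm-ordered statistics are the reordering with $\|\mathbf{X}_{(1)}\|\le\dots\le\|\mathbf{X}_{(n)}\|$. The truncated distribution is $F_{\mathbf{X}|\|\mathbf{X}\|}(\mathbf{B}\,|\,y)=\mathbb{P}(\mathbf{X}\in\mathbf{B}\mid\|\mathbf{X}\|\le y)$. For $y>0$, $\mathring{\mathbf{X}}_y$ is a random vector on the sphere $\mathcal{S}_y=\{\mathbf{x}:\|\mathbf{x}\|=y\}$ with law $\mathbb{P}(\mathring{\mathbf{X}}_y\in\mathbf{B}_y)=\mathbb{P}(\mathbf{X}\in\mathbf{B}_y\mid\|\mathbf{X}\|=y)$ for $\mathbf{B}_y\subseteq\mathcal{S}_y$. Conditioning on null events is in the sense of regular conditional distributions; $\mathcal{L}$ denotes the law and $\times$ the product of laws. *)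

theory Defs
  imports "HOL-Probability.Probability"
begin

definition is_norm :: "('a::real_vector \<Rightarrow> real) \<Rightarrow> bool" where
  "is_norm N \<longleftrightarrow> (\<forall>x. N x = 0 \<longleftrightarrow> x = 0) \<and> (\<forall>c x. N (c *\<^sub>R x) = \<bar>c\<bar> * N x)
     \<and> (\<forall>x y. N (x + y) \<le> N x + N y)"

text \<open>Norm-ordered statistics of the vector (x 0, ..., x (n-1)), 0-indexed:
  ostat N n x k is the (k+1)-th order statistic. Ties are broken by index
  (stable sort); ties have probability zero in the theorem.\<close>
definition ostat :: "('a \<Rightarrow> real) \<Rightarrow> nat \<Rightarrow> (nat \<Rightarrow> 'a) \<Rightarrow> nat \<Rightarrow> 'a" where
  "ostat N n x = (let idx = sort_key (\<lambda>i. N (x i)) [0..<n]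
                  in restrict (\<lambda>k. x (idx ! k)) {..<n})"

text \<open>When P(N X \<le> y) = 0 it is not
  defined in the paper; we then (arbitrarily) return P itself. Such y form a
  null set for the conditioning variable in the theorem.\<close>
definition trunc_law :: "'a measure \<Rightarrow> ('a \<Rightarrow> real) \<Rightarrow> real \<Rightarrow> 'a measure" where
  "trunc_law P N y =
    (if measure P {x\<in>space P. N x \<le> y} > 0
     then density P (\<lambda>x. ennreal (indicator {x. N x \<le> y} x / measure P {x\<in>space P. N x \<le> y}))
     else P)"

text \<open>K is a regular conditional distribution of Z (valued in MZ) given T
  (valued in MT) under M: a probability kernel disintegrating the joint law.\<close>
definition is_rcd :: "'o measure \<Rightarrow> ('o \<Rightarrow> 'b) \<Rightarrow> 'b measure \<Rightarrow> ('o \<Rightarrow> 'c) \<Rightarrow> 'c measure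
    \<Rightarrow> ('c \<Rightarrow> 'b measure) \<Rightarrow> bool" where
  "is_rcd M Z MZ T MT K \<longleftrightarrow>
     (\<forall>t\<in>space MT. prob_space (K t) \<and> sets (K t) = sets MZ) \<and>
     (\<forall>A\<in>sets MZ. (\<lambda>t. emeasure (K t) A) \<in> borel_measurable MT) \<and>
     (\<forall>A\<in>sets MZ. \<forall>B\<in>sets MT.
        emeasure M {\<omega>\<in>space M. Z \<omega> \<in> A \<and> T \<omega> \<in> B}
        = (\<integral>\<^sup>+ t. indicator B t * emeasure (K t) A \<partial>(distr M MT T)))"

end

theory Submission
  imports Defs
begin

lemma norm_neg: "is_norm N \<Longrightarrow> N (- x) = N x"
  unfolding is_norm_def by (metis abs_minus_cancel abs_one mult_1 scaleR_minus1_left)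

lemma norm_nonneg': "is_norm N \<Longrightarrow> 0 \<le> N x"
proof -
  assume n: "is_norm N"
  have "N 0 \<le> N x + N (- x)" using n unfolding is_norm_def by (metis add.right_inverse)
  moreover have "N 0 = 0" using n unfolding is_norm_def by auto
  ultimately show ?thesis using norm_neg[OF n] by auto
qed

lemma norm_diff_le: "is_norm N \<Longrightarrow> \<bar>N x - N y\<bar> \<le> N (x - y)"
proof -
  assume n: "is_norm N"
  have t: "\<And>a b. N (a + b) \<le> N a + N b" using n unfolding is_norm_def by auto
  have "N x \<le> N (x - y) + N y" using t[of "x - y" y] by simp
  moreover have "N y \<le> N (y - x) + N x" using t[of "y - x" x] by simp
  moreover have "N (y - x) = N (x - y)" using norm_neg[OF n, of "x - y"] by simp
  ultimately show ?thesis by linarith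
qed

lemma norm_sum_le: assumes n: "is_norm N" and fin: "finite S" shows "N (\<Sum>b\<in>S. f b) \<le> (\<Sum>b\<in>S. N (f b))"
  using fin
proof (induction S rule: finite_induct)
  case empty
  have "N 0 = 0" using n unfolding is_norm_def by blast
  then show ?case by simp
next
  case (insert a S)
  then have "N (f a + sum f S) \<le> N (f a) + N (sum f S)" using n unfolding is_norm_def by auto
  with insert show ?case by simp
qed

lemma norm_bound:
  fixes N :: "'a::euclidean_space \<Rightarrow> real"
  assumes n: "is_norm N"
  shows "N x \<le> (\<Sum>b\<in>Basis. N b) * norm x"
proof -
  have "N x = N (\<Sum>b\<in>Basis. inner x b *\<^sub>R b)" by (simp add: euclidean_representation)
  also have "\<dots> \<le> (\<Sum>b\<in>Basis. N (inner x b *\<^sub>R b))" by (rule norm_sum_le[OF n]) auto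
  also have "\<dots> = (\<Sum>b\<in>Basis. \<bar>inner x b\<bar> * N b)" using n unfolding is_norm_def by auto
  also have "\<dots> \<le> (\<Sum>b\<in>Basis. norm x * N b)"
    by (intro sum_mono mult_right_mono norm_nonneg'[OF n]) (simp add: Basis_le_norm)
  also have "\<dots> = (\<Sum>b\<in>Basis. N b) * norm x" by (simp add: sum_distrib_left mult.commute)
  finally show ?thesis .
qed

lemma norm_continuous:
  fixes N :: "'a::euclidean_space \<Rightarrow> real"
  assumes n: "is_norm N"
  shows "continuous_on UNIV N"
proof -
  define C where "C = (\<Sum>b\<in>Basis. N b) + 1"
  have C: "C > 0" unfolding C_def using norm_nonneg'[OF n] by (simp add: sum_nonneg add_nonneg_pos)
  have H: "\<bar>N y - N x\<bar> \<le> C * norm (y - x)" for x y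
  proof -
    have "\<bar>N y - N x\<bar> \<le> N (y - x)" by (rule norm_diff_le[OF n])
    also have "\<dots> \<le> (\<Sum>b\<in>Basis. N b) * norm (y - x)" by (rule norm_bound[OF n])
    also have "\<dots> \<le> C * norm (y - x)" unfolding C_def by (simp add: distrib_right)
    finally show ?thesis .
  qed
  show ?thesis
    unfolding continuous_on_iff
  proof (intro ballI allI impI)
    fix x and e :: real assume e: "0 < e"
    show "\<exists>d>0. \<forall>x'\<in>UNIV. dist x' x < d \<longrightarrow> dist (N x') (N x) < e"
    proof (intro exI[of _ "e / C"] conjI ballI impI)
      show "0 < e / C" using e C by simp
      fix y assume "dist y x < e / C"
      then have "C * norm (y - x) < e" using C by (simp add: dist_norm field_simps)
      then show "dist (N y) (N x) < e" proof -
        have "\<bar>N y - N x\<bar> < e" using H[of x y] H[of y x] \<open>C * norm (y - x) < e\<close> by linarith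
        then show ?thesis by (simp add: dist_real_def)
      qed
    qed
  qed
qed

lemma norm_measurable:
  fixes N :: "'a::euclidean_space \<Rightarrow> real"
  shows "is_norm N \<Longrightarrow> N \<in> borel_measurable borel"
  by (rule borel_measurable_continuous_onI[OF norm_continuous])


lemma insort_end: "(\<forall>y\<in>set L. f y < f a) \<Longrightarrow> insort_key f a L = L @ [a]"
  by (induction L) auto

lemma insort_snoc: "f b < f a \<Longrightarrow> insort_key f b (L @ [a]) = insort_key f b L @ [a]"
  by (induction L) auto

lemma sort_max:
  assumes "distinct xs" "a \<in> set xs" "\<forall>y\<in>set xs. y \<noteq> a \<longrightarrow> f y < f a"
  shows "sort_key f xs = sort_key f (remove1 a xs) @ [a]"
  using assms
proof (induction xs)
  case Nil then show ?case by simp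
next
  case (Cons b xs)
  show ?case
  proof (cases "b = a")
    case True
    with Cons.prems have "a \<notin> set xs" by auto
    then have "remove1 a xs = xs" by (simp add: remove1_idem)
    moreover have "\<forall>y\<in>set (sort_key f xs). f y < f a" using Cons.prems True by auto
    ultimately show ?thesis using True by (simp add: insort_end)
  next
    case False
    then have "a \<in> set xs" using Cons.prems by auto
    then have IH: "sort_key f xs = sort_key f (remove1 a xs) @ [a]" using Cons by auto
    have "f b < f a" using Cons.prems False by auto
    then show ?thesis using False IH by (simp add: insort_snoc)
  qed
qed

lemma insort_map: "insort_key f (g a) (map g L) = map g (insort_key (\<lambda>x. f (g x)) a L)"
  by (induction L) auto

lemma sort_key_map: "sort_key f (map g xs) = map g (sort_key (\<lambda>x. f (g x)) xs)"
  by (induction xs) (auto simp: insort_map)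

lemma insort_cong: "(\<forall>i\<in>insert a (set L). f i = g i) \<Longrightarrow> insort_key f a L = insort_key g a L"
  by (induction L) auto

lemma sort_key_cong': "(\<forall>i\<in>set xs. f i = g i) \<Longrightarrow> sort_key f xs = sort_key g xs"
  by (induction xs) (auto intro!: insort_cong)

definition sk :: "nat \<Rightarrow> nat \<Rightarrow> nat" where "sk j i = (if i < j then i else Suc i)"

lemma remove1_upt: "j < n \<Longrightarrow> remove1 j [0..<n] = map (sk j) [0..<n - 1]"
proof -
  assume j: "j < n"
  have a1: "[0..<n] = [0..<j] @ [j..<n]" using upt_add_eq_append[of 0 j "n - j"] j by simp
  have a2: "[j..<n] = j # [Suc j..<n]" using j by (simp add: upt_conv_Cons)
  have a: "[0..<n] = [0..<j] @ j # [Suc j..<n]" using a1 a2 by simp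
  have b: "[0..<n - 1] = [0..<j] @ [j..<n - 1]" using upt_add_eq_append[of 0 j "n - 1 - j"] j by simp
  have c: "map (sk j) [0..<j] = [0..<j]" by (intro map_idI) (auto simp: sk_def)
  have d: "map (sk j) [j..<n - 1] = map Suc [j..<n - 1]" by (intro map_cong) (auto simp: sk_def)
  have e: "map Suc [j..<n - 1] = [Suc j..<n]" using j by (simp add: map_Suc_upt)
  show ?thesis unfolding a b map_append c d e by (simp add: remove1_append)
qed

lemma ostat_cong: "(\<And>i. i < n \<Longrightarrow> x i = y i) \<Longrightarrow> ostat N n x = ostat N n y"
proof -
  assume h: "\<And>i. i < n \<Longrightarrow> x i = y i"
  have e: "sort_key (\<lambda>i. N (x i)) [0..<n] = sort_key (\<lambda>i. N (y i)) [0..<n]"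
    by (rule sort_key_cong') (auto simp: h)
  show ?thesis unfolding ostat_def Let_def e
  proof (intro restrict_ext)
    fix k assume "k \<in> {..<n}"
    then have "sort_key (\<lambda>i. N (y i)) [0..<n] ! k \<in> set (sort_key (\<lambda>i. N (y i)) [0..<n])"
      by (intro nth_mem) simp
    then show "x (sort_key (\<lambda>i. N (y i)) [0..<n] ! k) = y (sort_key (\<lambda>i. N (y i)) [0..<n] ! k)"
      by (intro h) simp
  qed
qed

lemma ostat_max:
  assumes j: "j < n" and mx: "\<forall>i<n. i \<noteq> j \<longrightarrow> N (x i) < N (x j)"
  shows "restrict (ostat N n x) {..<n - 1} = ostat N (n - 1) (\<lambda>i. x (sk j i))"
    and "ostat N n x (n - 1) = x j"
proof -
  let ?f = "\<lambda>i. N (x i)"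
  let ?L = "sort_key (\<lambda>i. N (x (sk j i))) [0..<n - 1]"
  have "sort_key ?f [0..<n] = sort_key ?f (remove1 j [0..<n]) @ [j]"
    by (rule sort_max) (use j mx in auto)
  also have "\<dots> = map (sk j) ?L @ [j]"
    using j by (simp add: remove1_upt sort_key_map comp_def)
  finally have S: "sort_key ?f [0..<n] = map (sk j) ?L @ [j]" .
  have len: "length ?L = n - 1" by simp
  show "ostat N n x (n - 1) = x j"
    unfolding ostat_def Let_def S using j len by (simp add: nth_append)
  show "restrict (ostat N n x) {..<n - 1} = ostat N (n - 1) (\<lambda>i. x (sk j i))"
    unfolding ostat_def Let_def S
    by (intro restrict_ext) (use len j in \<open>auto simp: nth_append\<close>)
qed

lemma measurable_insort:
  fixes k :: nat and N :: "'a::topological_space \<Rightarrow> real"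
  assumes N: "N \<in> borel_measurable borel" and a: "a < k" and L: "set L \<subseteq> {..<k}"
  shows "(\<lambda>x. insort_key (\<lambda>i. N (x i)) a L) \<in> PiM {..<k} (\<lambda>_. borel) \<rightarrow>\<^sub>M count_space UNIV"
  using L
proof (induction L)
  case Nil then show ?case by simp
next
  case (Cons b L)
  then have b: "b < k" and IH: "(\<lambda>x. insort_key (\<lambda>i. N (x i)) a L) \<in> PiM {..<k} (\<lambda>_. borel) \<rightarrow>\<^sub>M count_space UNIV"
    by auto
  have ma: "(\<lambda>x. N (x a)) \<in> PiM {..<k} (\<lambda>_. borel) \<rightarrow>\<^sub>M borel"
    by (rule measurable_compose[OF measurable_component_singleton[of a "{..<k}" "\<lambda>_. borel"] N]) (use a in auto)
  have mb: "(\<lambda>x. N (x b)) \<in> PiM {..<k} (\<lambda>_. borel) \<rightarrow>\<^sub>M borel"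
    by (rule measurable_compose[OF measurable_component_singleton[of b "{..<k}" "\<lambda>_. borel"] N]) (use b in auto)
  have p: "{x \<in> space (PiM {..<k} (\<lambda>_. borel)). N (x a) \<le> N (x b)} \<in> sets (PiM {..<k} (\<lambda>_. borel))"
    using borel_measurable_le[of "\<lambda>x. N (x a)" "PiM {..<k} (\<lambda>_. borel)" "\<lambda>x. N (x b)"] ma mb by blast
  show ?case
    by (simp only: insort_key.simps, rule measurable_If[OF _ _ p]) (use IH in auto)
qed

lemma measurable_sortkey:
  fixes k :: nat and N :: "'a::topological_space \<Rightarrow> real"
  assumes N: "N \<in> borel_measurable borel" and L: "set L \<subseteq> {..<k}"
  shows "(\<lambda>x. sort_key (\<lambda>i. N (x i)) L) \<in> PiM {..<k} (\<lambda>_. borel) \<rightarrow>\<^sub>M count_space UNIV"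
  using L
proof (induction L)
  case Nil then show ?case by simp
next
  case (Cons a L)
  then have a: "a < k" and IH: "(\<lambda>x. sort_key (\<lambda>i. N (x i)) L) \<in> PiM {..<k} (\<lambda>_. borel) \<rightarrow>\<^sub>M count_space UNIV"
    by auto
  let ?F = "\<lambda>(L'::nat list) (x::nat \<Rightarrow> _). if set L' \<subseteq> {..<k} then insort_key (\<lambda>i. N (x i)) a L' else []"
  have "(\<lambda>x. ?F (sort_key (\<lambda>i. N (x i)) L) x) \<in> PiM {..<k} (\<lambda>_. borel) \<rightarrow>\<^sub>M count_space UNIV"
  proof (rule measurable_compose_countable[OF _ IH])
    fix L' :: "nat list" show "?F L' \<in> PiM {..<k} (\<lambda>_. borel) \<rightarrow>\<^sub>M count_space UNIV"
      by (cases "set L' \<subseteq> {..<k}") (auto intro: measurable_insort[OF N a])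
  qed
  moreover have "?F (sort_key (\<lambda>i. N (x i)) L) x = sort_key (\<lambda>i. N (x i)) (a # L)" for x
    using Cons.prems by simp
  ultimately show ?case by simp
qed

lemma measurable_ostat[measurable]:
  fixes N :: "'a::topological_space \<Rightarrow> real"
  assumes N: "N \<in> borel_measurable borel"
  shows "ostat N k \<in> PiM {..<k} (\<lambda>_. borel) \<rightarrow>\<^sub>M PiM {..<k} (\<lambda>_. borel)"
proof -
  have I: "(\<lambda>x. sort_key (\<lambda>i. N (x i)) [0..<k]) \<in> PiM {..<k} (\<lambda>_. borel) \<rightarrow>\<^sub>M count_space UNIV"
    by (rule measurable_sortkey[OF N]) auto
  have "(\<lambda>x. restrict (\<lambda>i. x (sort_key (\<lambda>i. N (x i)) [0..<k] ! i)) {..<k}) \<in> PiM {..<k} (\<lambda>_. borel) \<rightarrow>\<^sub>M PiM {..<k} (\<lambda>_. borel)"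
  proof (rule measurable_restrict)
    fix i assume i: "i \<in> {..<k}"
    let ?F = "\<lambda>(L::nat list) (x::nat \<Rightarrow> 'a). if L ! i < k then x (L ! i) else undefined"
    have "(\<lambda>x. ?F (sort_key (\<lambda>i. N (x i)) [0..<k]) x) \<in> PiM {..<k} (\<lambda>_. borel) \<rightarrow>\<^sub>M borel"
    proof (rule measurable_compose_countable[OF _ I])
      fix L :: "nat list" show "?F L \<in> PiM {..<k} (\<lambda>_. borel) \<rightarrow>\<^sub>M borel"
        by (cases "L ! i < k") auto
    qed
    moreover have "?F (sort_key (\<lambda>i. N (x i)) [0..<k]) x = x (sort_key (\<lambda>i. N (x i)) [0..<k] ! i)" for x
    proof -
      have "sort_key (\<lambda>i. N (x i)) [0..<k] ! i \<in> set (sort_key (\<lambda>i. N (x i)) [0..<k])"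
        using i by (intro nth_mem) simp
      then show ?thesis by simp
    qed
    ultimately show "(\<lambda>x. x (sort_key (\<lambda>i. N (x i)) [0..<k] ! i)) \<in> PiM {..<k} (\<lambda>_. borel) \<rightarrow>\<^sub>M borel"
      by simp
  qed
  then show ?thesis unfolding ostat_def Let_def by (simp add: fun_eq_iff)
qed


lemma sk_inj: "inj_on (sk j) A"
  by (auto simp: inj_on_def sk_def split: if_splits)

lemma sk_range: "j < n \<Longrightarrow> i < n - 1 \<Longrightarrow> sk j i < n"
  by (auto simp: sk_def)

lemma sk_neq: "sk j i \<noteq> j"
  by (auto simp: sk_def)

definition skinv :: "nat \<Rightarrow> nat \<Rightarrow> nat" where "skinv j k = (if k < j then k else k - 1)"

lemma skinv_sk[simp]: "skinv j (sk j i) = i"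
  by (auto simp: sk_def skinv_def)

lemma law_Y:
  fixes X :: "nat \<Rightarrow> 'o \<Rightarrow> 'a::topological_space"
  assumes M: "prob_space M" and ind: "prob_space.indep_vars M (\<lambda>_. borel) X {..<n}"
    and meas: "\<forall>i<n. X i \<in> borel_measurable M" and dist: "\<forall>i<n. distr M borel (X i) = P"
    and j: "j < n"
  shows "distr M (PiM {..<n-1} (\<lambda>_. borel)) (\<lambda>\<omega>. restrict (\<lambda>i. X (sk j i) \<omega>) {..<n-1}) = PiM {..<n-1} (\<lambda>_. P)"
proof -
  interpret prob_space M by fact
  have Pj: "P = distr M borel (X j)" using dist j by auto
  have PP: "prob_space P" unfolding Pj by (rule prob_space_distr) (use meas j in auto)
  have sP: "sets P = sets borel" unfolding Pj by simp
  have PPs: "product_prob_space (\<lambda>_. P)"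
    unfolding product_prob_space_def product_sigma_finite_def product_prob_space_axioms_def
    using PP prob_space_imp_sigma_finite by blast
  interpret PP: product_prob_space "\<lambda>_. P" "{..<n-1}" by (rule PPs)
  have Ym: "(\<lambda>\<omega>. restrict (\<lambda>i. X (sk j i) \<omega>) {..<n-1}) \<in> M \<rightarrow>\<^sub>M PiM {..<n-1} (\<lambda>_. borel)"
  proof (rule measurable_restrict)
    fix i assume "i \<in> {..<n-1}"
    then have "sk j i < n" using sk_range j by auto
    then show "X (sk j i) \<in> borel_measurable M" using meas by auto
  qed
  show ?thesis
  proof (rule PP.PiM_eqI)
    show "sets (distr M (PiM {..<n-1} (\<lambda>_. borel)) (\<lambda>\<omega>. restrict (\<lambda>i. X (sk j i) \<omega>) {..<n-1})) = sets (PiM {..<n-1} (\<lambda>_. P))"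
      using sP by (simp cong: sets_PiM_cong)
    fix C assume C: "\<And>i. i \<in> {..<n-1} \<Longrightarrow> C i \<in> sets P"
    have Cb: "C i \<in> sets borel" if "i < n - 1" for i using C that sP by auto
    have pre: "(\<lambda>\<omega>. restrict (\<lambda>i. X (sk j i) \<omega>) {..<n-1}) -` Pi\<^sub>E {..<n-1} C \<inter> space M
        = {\<omega>\<in>space M. \<forall>i<n-1. X (sk j i) \<omega> \<in> C i}"
      by (auto simp: PiE_def Pi_def)
    have "emeasure (distr M (PiM {..<n-1} (\<lambda>_. borel)) (\<lambda>\<omega>. restrict (\<lambda>i. X (sk j i) \<omega>) {..<n-1})) (Pi\<^sub>E {..<n-1} C)
       = emeasure M {\<omega>\<in>space M. \<forall>i<n-1. X (sk j i) \<omega> \<in> C i}"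
      unfolding pre[symmetric] by (rule emeasure_distr[OF Ym]) (use Cb in \<open>auto intro!: sets_PiM_I_finite\<close>)
    also have "\<dots> = (\<Prod>i\<in>{..<n-1}. emeasure P (C i))"
    proof (cases "n - 1 = 0")
      case True then show ?thesis by (simp add: emeasure_space_1)
    next
      case False
      let ?A = "sk j ` {..<n-1}"
      have AI: "?A \<subseteq> {..<n}" using sk_range j by auto
      have seteq: "{\<omega>\<in>space M. \<forall>i<n-1. X (sk j i) \<omega> \<in> C i} = (\<Inter>k\<in>?A. X k -` C (skinv j k) \<inter> space M)"
      proof -
        have "0 \<in> {..<n-1}" using False by auto
        then show ?thesis by (auto simp del: vimage_Int simp: lessThan_empty_iff)
      qed
      have "prob {\<omega>\<in>space M. \<forall>i<n-1. X (sk j i) \<omega> \<in> C i} = (\<Prod>k\<in>?A. prob (X k -` C (skinv j k) \<inter> space M))"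
        unfolding seteq by (rule indep_varsD[OF ind]) (use False AI Cb in \<open>auto simp: lessThan_empty_iff\<close>)
      also have "\<dots> = (\<Prod>i\<in>{..<n-1}. prob (X (sk j i) -` C i \<inter> space M))"
        by (subst prod.reindex[OF sk_inj]) simp
      also have "\<dots> = (\<Prod>i\<in>{..<n-1}. measure P (C i))"
      proof (intro prod.cong refl)
        fix i assume i: "i \<in> {..<n-1}"
        then have "P = distr M borel (X (sk j i))" using dist sk_range j by auto
        then show "prob (X (sk j i) -` C i \<inter> space M) = measure P (C i)"
          using i Cb meas sk_range j by (auto simp: measure_distr)
      qed
      finally have "prob {\<omega>\<in>space M. \<forall>i<n-1. X (sk j i) \<omega> \<in> C i} = (\<Prod>i\<in>{..<n-1}. measure P (C i))" .
      then show ?thesis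
        by (simp add: emeasure_eq_measure PP.M.emeasure_eq_measure prod_ennreal[symmetric] measure_nonneg)
    qed
    finally show "emeasure (distr M (PiM {..<n-1} (\<lambda>_. borel)) (\<lambda>\<omega>. restrict (\<lambda>i. X (sk j i) \<omega>) {..<n-1})) (Pi\<^sub>E {..<n-1} C)
       = (\<Prod>i\<in>{..<n-1}. emeasure P (C i))" .
  qed simp
qed

lemma law_W:
  fixes X :: "nat \<Rightarrow> 'o \<Rightarrow> 'a::topological_space"
  assumes M: "prob_space M" and ind: "prob_space.indep_vars M (\<lambda>_. borel) X {..<n}"
    and meas: "\<forall>i<n. X i \<in> borel_measurable M" and dist: "\<forall>i<n. distr M borel (X i) = P"
    and j: "j < n"
  shows "distr M (PiM {..<n-1} (\<lambda>_. borel) \<Otimes>\<^sub>M borel) (\<lambda>\<omega>. (restrict (\<lambda>i. X (sk j i) \<omega>) {..<n-1}, X j \<omega>))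
     = PiM {..<n-1} (\<lambda>_. P) \<Otimes>\<^sub>M P"
proof -
  interpret prob_space M by fact
  let ?A = "sk j ` {..<n-1}"
  have AI: "?A \<subseteq> {..<n}" using sk_range j by auto
  have iv: "indep_var (PiM ?A (\<lambda>_. borel)) (\<lambda>\<omega>. restrict (\<lambda>i. X i \<omega>) ?A) (PiM {j} (\<lambda>_. borel)) (\<lambda>\<omega>. restrict (\<lambda>i. X i \<omega>) {j})"
    by (rule indep_var_restrict[OF ind]) (use AI j in \<open>auto simp: sk_def split: if_splits\<close>)
  have r: "(\<lambda>zs::nat \<Rightarrow> 'a. restrict (\<lambda>i. zs (sk j i)) {..<n-1}) \<in> PiM ?A (\<lambda>_. borel) \<rightarrow>\<^sub>M PiM {..<n-1} (\<lambda>_. borel)"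
    by (intro measurable_restrict measurable_component_singleton) auto
  have e: "(\<lambda>zs::nat \<Rightarrow> 'a. zs j) \<in> PiM {j} (\<lambda>_. borel) \<rightarrow>\<^sub>M borel"
    by (intro measurable_component_singleton) auto
  let ?Ra = "\<lambda>\<omega>. restrict (\<lambda>i. X i \<omega>) ?A"
  let ?Rb = "\<lambda>\<omega>. restrict (\<lambda>i. X i \<omega>) {j}"
  let ?r = "\<lambda>zs::nat \<Rightarrow> 'a. restrict (\<lambda>i. zs (sk j i)) {..<n-1}"
  let ?e = "\<lambda>zs::nat \<Rightarrow> 'a. zs j"
  have Ra: "?Ra \<in> M \<rightarrow>\<^sub>M PiM ?A (\<lambda>_. borel)" using iv by (rule indep_var_rv1)
  have Rb: "?Rb \<in> M \<rightarrow>\<^sub>M PiM {j} (\<lambda>_. borel)" using iv by (rule indep_var_rv2)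
  have D1: "distr M (PiM ?A (\<lambda>_. borel) \<Otimes>\<^sub>M PiM {j} (\<lambda>_. borel)) (\<lambda>\<omega>. (?Ra \<omega>, ?Rb \<omega>))
      = distr M (PiM ?A (\<lambda>_. borel)) ?Ra \<Otimes>\<^sub>M distr M (PiM {j} (\<lambda>_. borel)) ?Rb"
    using iv unfolding indep_var_distribution_eq by simp
  have pm: "(\<lambda>(x, y). (?r x, ?e y)) \<in> (PiM ?A (\<lambda>_. borel) \<Otimes>\<^sub>M PiM {j} (\<lambda>_. borel)) \<rightarrow>\<^sub>M (PiM {..<n-1} (\<lambda>_. borel) \<Otimes>\<^sub>M borel)"
    using r e by measurable
  have W: "(\<lambda>\<omega>. (restrict (\<lambda>i. X (sk j i) \<omega>) {..<n-1}, X j \<omega>)) = (\<lambda>(x, y). (?r x, ?e y)) \<circ> (\<lambda>\<omega>. (?Ra \<omega>, ?Rb \<omega>))"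
    by (auto simp: fun_eq_iff)
  have Y: "(\<lambda>\<omega>. restrict (\<lambda>i. X (sk j i) \<omega>) {..<n-1}) = ?r \<circ> ?Ra"
    by (auto simp: fun_eq_iff)
  have Xj: "X j = ?e \<circ> ?Rb"
    by (auto simp: fun_eq_iff)
  have sf: "sigma_finite_measure (distr (distr M (PiM {j} (\<lambda>_. borel)) ?Rb) borel ?e)"
  proof -
    have "prob_space (distr M (PiM {j} (\<lambda>_. borel)) ?Rb)" by (rule prob_space_distr[OF Rb])
    then have "prob_space (distr (distr M (PiM {j} (\<lambda>_. borel)) ?Rb) borel ?e)"
      by (rule prob_space.prob_space_distr) (simp add: e)
    then show ?thesis by (rule prob_space_imp_sigma_finite)
  qed
  have "distr M (PiM {..<n-1} (\<lambda>_. borel) \<Otimes>\<^sub>M borel) (\<lambda>\<omega>. (restrict (\<lambda>i. X (sk j i) \<omega>) {..<n-1}, X j \<omega>))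
      = distr (distr M (PiM ?A (\<lambda>_. borel) \<Otimes>\<^sub>M PiM {j} (\<lambda>_. borel)) (\<lambda>\<omega>. (?Ra \<omega>, ?Rb \<omega>)))
          (PiM {..<n-1} (\<lambda>_. borel) \<Otimes>\<^sub>M borel) (\<lambda>(x, y). (?r x, ?e y))"
    unfolding W by (rule distr_distr[symmetric, OF pm]) (intro measurable_Pair Ra Rb)
  also have "\<dots> = distr (distr M (PiM ?A (\<lambda>_. borel)) ?Ra) (PiM {..<n-1} (\<lambda>_. borel)) ?r
      \<Otimes>\<^sub>M distr (distr M (PiM {j} (\<lambda>_. borel)) ?Rb) borel ?e"
    unfolding D1 by (rule pair_measure_distr[symmetric, OF _ _ sf]) (simp_all add: r e)
  also have "\<dots> = distr M (PiM {..<n-1} (\<lambda>_. borel)) (\<lambda>\<omega>. restrict (\<lambda>i. X (sk j i) \<omega>) {..<n-1}) \<Otimes>\<^sub>M distr M borel (X j)"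
    unfolding Y Xj distr_distr[OF r Ra] distr_distr[OF e Rb] ..
  also have "\<dots> = PiM {..<n-1} (\<lambda>_. P) \<Otimes>\<^sub>M P"
    using law_Y[OF assms] dist j by auto
  finally show ?thesis .
qed


lemma sk_skinv: "k \<noteq> j \<Longrightarrow> sk j (skinv j k) = k"
  by (auto simp: sk_def skinv_def)

lemma skinv_range: "k < n \<Longrightarrow> j < n \<Longrightarrow> k \<noteq> j \<Longrightarrow> skinv j k < n - 1"
  by (auto simp: skinv_def)

locale ctx = prob_space M for M :: "'o measure" +
  fixes X :: "nat \<Rightarrow> 'o \<Rightarrow> 'a::euclidean_space" and P :: "'a measure" and N :: "'a \<Rightarrow> real" and n :: nat
  assumes nrm: "is_norm N" and n1: "1 \<le> n"
    and meas: "\<forall>i<n. X i \<in> borel_measurable M"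
    and ind: "indep_vars (\<lambda>_. borel) X {..<n}"
    and dist: "\<forall>i<n. distr M borel (X i) = P"
    and ac: "absolutely_continuous lborel (distr P borel N)"
begin

lemma Nm[measurable]: "N \<in> borel_measurable borel"
  by (rule norm_measurable[OF nrm])

lemma P0: "P = distr M borel (X 0)" using dist n1 by auto

lemma PP: "prob_space P" unfolding P0 by (rule prob_space_distr) (use meas n1 in auto)

lemma sP[measurable_cong]: "sets P = sets borel" unfolding P0 by simp

lemma spP[simp]: "space P = UNIV" unfolding P0 by simp

lemma noatom: "emeasure P {x. N x = c} = 0"
proof -
  have "{c} \<in> null_sets lborel" using emeasure_lborel_Icc_eq[of c c] by (simp add: null_sets_def)
  then have "{c} \<in> null_sets (distr P borel N)" using ac unfolding absolutely_continuous_def by auto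
  then have "emeasure (distr P borel N) {c} = 0" by auto
  moreover have "emeasure (distr P borel N) {c} = emeasure P (N -` {c} \<inter> space P)"
    by (rule emeasure_distr) (auto simp: measurable_cong_sets[OF sP refl])
  ultimately show ?thesis by (simp add: vimage_def)
qed

definition Z :: "'o \<Rightarrow> (nat \<Rightarrow> 'a) \<times> 'a" where
  "Z \<omega> = (restrict (ostat N n (\<lambda>i. X i \<omega>)) {..<n - 1}, ostat N n (\<lambda>i. X i \<omega>) (n - 1))"

definition W :: "nat \<Rightarrow> 'o \<Rightarrow> (nat \<Rightarrow> 'a) \<times> 'a" where
  "W j \<omega> = (restrict (\<lambda>i. X (sk j i) \<omega>) {..<n-1}, X j \<omega>)"

abbreviation "PM \<equiv> PiM {..<n-1} (\<lambda>_. borel::'a measure)"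
abbreviation "PPm \<equiv> PiM {..<n-1} (\<lambda>_. P)"

lemma PPm_sets[measurable_cong]: "sets PPm = sets PM"
  using sP by (simp cong: sets_PiM_cong)

lemma W_meas[measurable]: "j < n \<Longrightarrow> W j \<in> M \<rightarrow>\<^sub>M PM \<Otimes>\<^sub>M borel"
  unfolding W_def
proof (intro measurable_Pair measurable_restrict)
  fix i assume "j < n" "i \<in> {..<n-1}"
  then have "sk j i < n" using sk_range by auto
  then show "X (sk j i) \<in> borel_measurable M" using meas by auto
qed (use meas in auto)

lemma W_law: "j < n \<Longrightarrow> distr M (PM \<Otimes>\<^sub>M borel) (W j) = PPm \<Otimes>\<^sub>M P"
  unfolding W_def by (rule law_W[OF prob_space_axioms ind meas dist])

lemma Xr_meas: "(\<lambda>\<omega>. restrict (\<lambda>i. X i \<omega>) {..<n}) \<in> M \<rightarrow>\<^sub>M PiM {..<n} (\<lambda>_. borel)"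
  by (intro measurable_restrict) (use meas in auto)

lemma ostat_meas: "(\<lambda>\<omega>. ostat N n (\<lambda>i. X i \<omega>)) \<in> M \<rightarrow>\<^sub>M PiM {..<n} (\<lambda>_. borel)"
proof -
  have "(\<lambda>\<omega>. ostat N n (restrict (\<lambda>i. X i \<omega>) {..<n})) \<in> M \<rightarrow>\<^sub>M PiM {..<n} (\<lambda>_. borel)"
    by (rule measurable_compose[OF Xr_meas measurable_ostat[OF Nm]])
  moreover have "ostat N n (restrict (\<lambda>i. X i \<omega>) {..<n}) = ostat N n (\<lambda>i. X i \<omega>)" for \<omega>
    by (rule ostat_cong) auto
  ultimately show ?thesis by simp
qed

lemma Z_meas[measurable]: "Z \<in> M \<rightarrow>\<^sub>M PM \<Otimes>\<^sub>M borel"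
  unfolding Z_def
proof (rule measurable_Pair)
  show "(\<lambda>\<omega>. restrict (ostat N n (\<lambda>i. X i \<omega>)) {..<n - 1}) \<in> M \<rightarrow>\<^sub>M PM"
    by (rule measurable_compose[OF ostat_meas measurable_restrict_subset]) auto
  show "(\<lambda>\<omega>. ostat N n (\<lambda>i. X i \<omega>) (n - 1)) \<in> borel_measurable M"
    by (rule measurable_compose[OF ostat_meas measurable_component_singleton]) (use n1 in auto)
qed

lemma ties: "AE \<omega> in M. \<forall>i<n. \<forall>k<n. i \<noteq> k \<longrightarrow> N (X i \<omega>) \<noteq> N (X k \<omega>)"
proof -
  interpret PPm: prob_space PPm by (intro prob_space_PiM PP)
  interpret PP: prob_space P by (rule PP)
  interpret pair_sigma_finite PPm P ..
  have one: "AE \<omega> in M. N (X i \<omega>) \<noteq> N (X k \<omega>)" if ik: "i < n" "k < n" "i \<noteq> k" for i k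
  proof -
    let ?i = "skinv k i"
    have i': "?i < n - 1" and ski: "sk k ?i = i" using skinv_range[OF ik(1) ik(2) ik(3)] sk_skinv[OF ik(3)] by auto
    have "(\<lambda>ys. ys ?i) \<in> PPm \<rightarrow>\<^sub>M P"
      by (rule measurable_component_singleton) (use i' in auto)
    then have ci: "(\<lambda>ys. ys ?i) \<in> PPm \<rightarrow>\<^sub>M borel"
      using measurable_cong_sets[where M=PPm, OF refl sP] by simp
    have "AE z in PPm \<Otimes>\<^sub>M P. N (fst z ?i) \<noteq> N (snd z)"
    proof (rule AE_pair_measure)
      show "{x \<in> space (PPm \<Otimes>\<^sub>M P). N (fst x ?i) \<noteq> N (snd x)} \<in> sets (PPm \<Otimes>\<^sub>M P)"
        using ci by measurable
      show "AE x in PPm. AE y in P. N (fst (x, y) ?i) \<noteq> N (snd (x, y))"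
      proof (rule AE_I2)
        fix ys
        show "AE y in P. N (fst (ys, y) ?i) \<noteq> N (snd (ys, y))"
          by (rule AE_I'[of "{x. N x = N (ys ?i)}"]) (auto simp: null_sets_def noatom)
      qed
    qed
    then have "AE z in distr M (PM \<Otimes>\<^sub>M borel) (W k). N (fst z ?i) \<noteq> N (snd z)"
      unfolding W_law[OF \<open>k < n\<close>] .
    then have "AE \<omega> in M. N (fst (W k \<omega>) ?i) \<noteq> N (snd (W k \<omega>))"
      by (rule AE_distrD[OF W_meas[OF \<open>k < n\<close>]])
    then show ?thesis using i' ski by (simp add: W_def)
  qed
  have "AE \<omega> in M. \<forall>i\<in>{..<n}. \<forall>k\<in>{..<n}. i \<noteq> k \<longrightarrow> N (X i \<omega>) \<noteq> N (X k \<omega>)"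
    by (intro AE_finite_allI) (auto intro: one)
  then show ?thesis by (rule AE_mp) (intro AE_I2, auto)
qed

end

context ctx begin

definition Lset :: "((nat \<Rightarrow> 'a) \<times> 'a) set" where
  "Lset = {z. \<forall>i<n-1. N (fst z i) \<le> N (snd z)}"

definition G :: "((nat \<Rightarrow> 'a) \<times> 'a \<Rightarrow> ennreal) \<Rightarrow> (nat \<Rightarrow> 'a) \<times> 'a \<Rightarrow> ennreal" where
  "G f z = indicator Lset z * f (ostat N (n-1) (fst z), snd z)"

lemma Lset_meas: "Lset \<inter> space (PM \<Otimes>\<^sub>M borel) \<in> sets (PM \<Otimes>\<^sub>M borel)"
proof (cases "n - 1 = 0")
  case True
  then have "Lset = UNIV" by (auto simp: Lset_def)
  then show ?thesis by simp
next
  case False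
  have "Lset \<inter> space (PM \<Otimes>\<^sub>M borel) = (\<Inter>i\<in>{..<n-1}. {z \<in> space (PM \<Otimes>\<^sub>M borel). N (fst z i) \<le> N (snd z)})"
    using False apply (auto simp: Lset_def)
    subgoal premises p for a b using p(2)[rule_format, of 0] p(1) by auto
    done
  also have "\<dots> \<in> sets (PM \<Otimes>\<^sub>M borel)"
  proof (rule sets.finite_INT)
    fix i assume i: "i \<in> {..<n-1}"
    have "(\<lambda>z. N (fst z i)) \<in> borel_measurable (PM \<Otimes>\<^sub>M borel)"
      by (intro measurable_compose[OF measurable_fst] measurable_compose[OF measurable_component_singleton[of i "{..<n-1}" "\<lambda>_. borel"] Nm]) (use i in auto)
    moreover have "(\<lambda>z. N (snd z)) \<in> borel_measurable (PM \<Otimes>\<^sub>M borel)" by measurable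
    ultimately show "{z \<in> space (PM \<Otimes>\<^sub>M borel). N (fst z i) \<le> N (snd z)} \<in> sets (PM \<Otimes>\<^sub>M borel)"
      by (rule borel_measurable_le)
  qed (use False in \<open>auto simp: lessThan_empty_iff\<close>)
  finally show ?thesis .
qed

lemma G_meas[measurable]:
  assumes f[measurable]: "f \<in> borel_measurable (PM \<Otimes>\<^sub>M borel)"
  shows "G f \<in> borel_measurable (PM \<Otimes>\<^sub>M borel)"
proof -
  have "(\<lambda>z. f (ostat N (n-1) (fst z), snd z)) \<in> borel_measurable (PM \<Otimes>\<^sub>M borel)"
    by measurable
  moreover have "(indicator Lset :: _ \<Rightarrow> ennreal) \<in> borel_measurable (PM \<Otimes>\<^sub>M borel)"
  proof -
    have "(indicator (Lset \<inter> space (PM \<Otimes>\<^sub>M borel)) :: _ \<Rightarrow> ennreal) \<in> borel_measurable (PM \<Otimes>\<^sub>M borel)"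
      by (rule borel_measurable_indicator[OF Lset_meas])
    moreover have "\<And>z. z \<in> space (PM \<Otimes>\<^sub>M borel) \<Longrightarrow> indicator (Lset \<inter> space (PM \<Otimes>\<^sub>M borel)) z = (indicator Lset z :: ennreal)"
      by (auto simp: indicator_def)
    ultimately show ?thesis by (subst (asm) measurable_cong) auto
  qed
  ultimately show ?thesis unfolding G_def[abs_def] by measurable
qed

lemma pointwise:
  assumes nt: "\<forall>i<n. \<forall>k<n. i \<noteq> k \<longrightarrow> N (X i \<omega>) \<noteq> N (X k \<omega>)"
  shows "f (Z \<omega>) = (\<Sum>j<n. G f (W j \<omega>))"
proof -
  define v where "v i = N (X i \<omega>)" for i
  define m0 where "m0 = Max (v ` {..<n})"
  have "m0 \<in> v ` {..<n}" unfolding m0_def using n1 by (intro Max_in) (auto simp: lessThan_empty_iff)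
  then obtain j0 where j0: "j0 < n" "v j0 = m0" by auto
  have le: "v i \<le> v j0" if "i < n" for i unfolding j0(2) m0_def using that by (intro Max_ge) auto
  have lt: "\<forall>i<n. i \<noteq> j0 \<longrightarrow> N (X i \<omega>) < N (X j0 \<omega>)"
    using le nt j0(1) unfolding v_def by (metis order_le_neq_trans)
  have a: "G f (W j0 \<omega>) = f (Z \<omega>)"
  proof -
    have inL: "W j0 \<omega> \<in> Lset"
      unfolding Lset_def W_def using le sk_range[OF j0(1)] unfolding v_def by auto
    have "ostat N (n-1) (restrict (\<lambda>i. X (sk j0 i) \<omega>) {..<n-1}) = ostat N (n-1) (\<lambda>i. X (sk j0 i) \<omega>)"
      by (rule ostat_cong) auto
    also have "\<dots> = restrict (ostat N n (\<lambda>i. X i \<omega>)) {..<n - 1}"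
      by (rule ostat_max(1)[of j0 n N "\<lambda>i. X i \<omega>", OF j0(1) lt, symmetric])
    finally have "(ostat N (n-1) (fst (W j0 \<omega>)), snd (W j0 \<omega>)) = Z \<omega>"
      unfolding W_def Z_def using ostat_max(2)[of j0 n N "\<lambda>i. X i \<omega>", OF j0(1) lt] by simp
    then show ?thesis unfolding G_def using inL by simp
  qed
  have b: "G f (W j \<omega>) = 0" if j: "j < n" "j \<noteq> j0" for j
  proof -
    let ?i = "skinv j j0"
    have i: "?i < n - 1" "sk j ?i = j0" using skinv_range[OF j0(1) j(1)] sk_skinv j by auto
    have "N (X j0 \<omega>) > N (X j \<omega>)" using lt j by auto
    then have "W j \<omega> \<notin> Lset" unfolding Lset_def W_def using i by force
    then show ?thesis unfolding G_def by simp
  qed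
  have "(\<Sum>j<n. G f (W j \<omega>)) = G f (W j0 \<omega>) + (\<Sum>j\<in>{..<n} - {j0}. G f (W j \<omega>))"
    by (rule sum.remove) (use j0 in auto)
  also have "(\<Sum>j\<in>{..<n} - {j0}. G f (W j \<omega>)) = 0"
    using b by (intro sum.neutral) auto
  finally show ?thesis using a by simp
qed

lemma decomp:
  assumes f[measurable]: "f \<in> borel_measurable (PM \<Otimes>\<^sub>M borel)"
  shows "(\<integral>\<^sup>+\<omega>. f (Z \<omega>) \<partial>M) = of_nat n * (\<integral>\<^sup>+z. G f z \<partial>(PPm \<Otimes>\<^sub>M P))"
proof -
  have "(\<integral>\<^sup>+\<omega>. f (Z \<omega>) \<partial>M) = (\<integral>\<^sup>+\<omega>. (\<Sum>j<n. G f (W j \<omega>)) \<partial>M)"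
    by (rule nn_integral_cong_AE) (rule AE_mp[OF ties], intro AE_I2 impI, rule pointwise)
  also have "\<dots> = (\<Sum>j<n. \<integral>\<^sup>+\<omega>. G f (W j \<omega>) \<partial>M)"
    by (rule nn_integral_sum) (auto intro: measurable_compose[OF W_meas G_meas[OF f]])
  also have "\<dots> = (\<Sum>j<n. \<integral>\<^sup>+z. G f z \<partial>(PPm \<Otimes>\<^sub>M P))"
  proof (intro sum.cong refl)
    fix j assume j: "j \<in> {..<n}"
    have "(\<integral>\<^sup>+z. G f z \<partial>(distr M (PM \<Otimes>\<^sub>M borel) (W j))) = (\<integral>\<^sup>+\<omega>. G f (W j \<omega>) \<partial>M)"
    proof (rule nn_integral_distr[OF W_meas])
      show "j < n" using j by simp
      show "G f \<in> borel_measurable (distr M (PM \<Otimes>\<^sub>M borel) (W j))"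
        unfolding measurable_distr_eq1 by (rule G_meas[OF f])
    qed
    then show "(\<integral>\<^sup>+\<omega>. G f (W j \<omega>) \<partial>M) = (\<integral>\<^sup>+z. G f z \<partial>(PPm \<Otimes>\<^sub>M P))"
      unfolding W_law[of j, OF j[simplified]] by simp
  qed
  also have "\<dots> = of_nat n * (\<integral>\<^sup>+z. G f z \<partial>(PPm \<Otimes>\<^sub>M P))" by simp
  finally show ?thesis .
qed

end

lemma disint:
  fixes P :: "'a::topological_space measure" and N :: "'a \<Rightarrow> real" and \<kappa> :: "real \<Rightarrow> 'a measure"
    and g :: "real \<times> 'a \<Rightarrow> ennreal"
  assumes PP: "prob_space P" and sP: "sets P = sets borel" and Nm: "N \<in> borel_measurable borel"
    and rcd: "is_rcd P (\<lambda>x. x) borel N borel \<kappa>"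
    and g: "g \<in> borel_measurable (borel \<Otimes>\<^sub>M borel)"
  shows "(\<integral>\<^sup>+x. g (N x, x) \<partial>P) = (\<integral>\<^sup>+t. \<integral>\<^sup>+x. g (t, x) \<partial>\<kappa> t \<partial>distr P borel N)"
proof -
  have K1: "\<And>t. prob_space (\<kappa> t)" "\<And>t. sets (\<kappa> t) = sets borel"
    using rcd unfolding is_rcd_def by auto
  have K2: "\<And>A. A \<in> sets borel \<Longrightarrow> (\<lambda>t. emeasure (\<kappa> t) A) \<in> borel_measurable borel"
    using rcd unfolding is_rcd_def by auto
  have K3: "\<And>A B. A \<in> sets borel \<Longrightarrow> B \<in> sets borel \<Longrightarrow>
      emeasure P {\<omega>\<in>space P. \<omega> \<in> A \<and> N \<omega> \<in> B} = (\<integral>\<^sup>+ t. indicator B t * emeasure (\<kappa> t) A \<partial>(distr P borel N))"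
    using rcd unfolding is_rcd_def by auto
  have \<kappa>m: "\<kappa> \<in> borel \<rightarrow>\<^sub>M subprob_algebra borel"
    by (rule measurable_subprob_algebra) (auto simp: K1 K2 prob_space_imp_subprob_space)
  define K where "K t = return borel t \<Otimes>\<^sub>M \<kappa> t" for t
  have Km: "K \<in> borel \<rightarrow>\<^sub>M subprob_algebra (borel \<Otimes>\<^sub>M borel)"
    unfolding K_def by (rule measurable_pair_measure[OF return_measurable \<kappa>m])
  have sK: "sets (K t) = sets (borel \<Otimes>\<^sub>M borel)" for t
    unfolding K_def by (rule sets_pair_measure_cong) (auto simp: K1)
  have Nm': "N \<in> P \<rightarrow>\<^sub>M borel" unfolding measurable_cong_sets[OF sP refl] by (rule Nm)
  have idm: "(\<lambda>x. x) \<in> P \<rightarrow>\<^sub>M borel" unfolding measurable_cong_sets[OF sP refl] by simp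
  have NXm: "(\<lambda>x. (N x, x)) \<in> P \<rightarrow>\<^sub>M borel \<Otimes>\<^sub>M borel"
    by (intro measurable_Pair Nm' idm)
  let ?PN = "distr P borel N"
  have Km': "K \<in> ?PN \<rightarrow>\<^sub>M subprob_algebra (borel \<Otimes>\<^sub>M borel)"
    unfolding measurable_distr_eq1 by (rule Km)
  let ?R = "?PN \<bind> K"
  let ?E = "{a \<times> b | a b. a \<in> sets (borel::real measure) \<and> b \<in> sets (borel::'a measure)}"
  have eqm: "distr P (borel \<Otimes>\<^sub>M borel) (\<lambda>x. (N x, x)) = ?R"
  proof (rule measure_eqI_generator_eq[where E = ?E and \<Omega> = UNIV and A = "\<lambda>_. UNIV"])
    show "Int_stable ?E" by (rule Int_stable_pair_measure_generator)
    show "?E \<subseteq> Pow UNIV" by auto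
    show "sets (distr P (borel \<Otimes>\<^sub>M borel) (\<lambda>x. (N x, x))) = sigma_sets UNIV ?E"
      by (simp add: sets_pair_measure)
    show "sets ?R = sigma_sets UNIV ?E"
      by (subst sets_bind[OF sK]) (auto simp: sets_pair_measure)
    show "range (\<lambda>_. UNIV) \<subseteq> ?E" by (auto intro!: exI[of _ UNIV])
    show "(\<Union>i. UNIV) = UNIV" by simp
    interpret Q: prob_space "distr P (borel \<Otimes>\<^sub>M borel) (\<lambda>x. (N x, x))"
      by (rule prob_space.prob_space_distr[OF PP NXm])
    show "emeasure (distr P (borel \<Otimes>\<^sub>M borel) (\<lambda>x. (N x, x))) UNIV \<noteq> \<infinity>" for i :: nat
      by simp
    fix Y assume "Y \<in> ?E"
    then obtain a b where Y: "Y = a \<times> b" and a: "a \<in> sets borel" and b: "b \<in> sets borel" by auto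
    have "emeasure (distr P (borel \<Otimes>\<^sub>M borel) (\<lambda>x. (N x, x))) Y = emeasure P ((\<lambda>x. (N x, x)) -` Y \<inter> space P)"
      by (rule emeasure_distr[OF NXm]) (simp add: Y a b)
    also have "(\<lambda>x. (N x, x)) -` Y \<inter> space P = {\<omega>\<in>space P. \<omega> \<in> b \<and> N \<omega> \<in> a}"
      unfolding Y by auto
    also have "emeasure P \<dots> = (\<integral>\<^sup>+ t. indicator a t * emeasure (\<kappa> t) b \<partial>?PN)"
      by (rule K3[OF b a])
    also have "\<dots> = (\<integral>\<^sup>+ t. emeasure (K t) Y \<partial>?PN)"
    proof (rule nn_integral_cong)
      fix t
      interpret kt: prob_space "\<kappa> t" by (rule K1)
      have "emeasure (K t) Y = emeasure (return borel t) a * emeasure (\<kappa> t) b"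
        unfolding K_def Y by (rule kt.emeasure_pair_measure_Times) (auto simp: a b K1)
      then show "indicator a t * emeasure (\<kappa> t) b = emeasure (K t) Y" using a by simp
    qed
    also have "\<dots> = emeasure ?R Y"
      by (rule emeasure_bind[symmetric, OF _ Km']) (auto simp: Y a b)
    finally show "emeasure (distr P (borel \<Otimes>\<^sub>M borel) (\<lambda>x. (N x, x))) Y = emeasure ?R Y" .
  qed
  have "(\<integral>\<^sup>+x. g (N x, x) \<partial>P) = (\<integral>\<^sup>+z. g z \<partial>distr P (borel \<Otimes>\<^sub>M borel) (\<lambda>x. (N x, x)))"
    by (rule nn_integral_distr[symmetric, OF NXm]) (simp add: g)
  also have "\<dots> = (\<integral>\<^sup>+z. g z \<partial>?R)" by (simp add: eqm)
  also have "\<dots> = (\<integral>\<^sup>+t. \<integral>\<^sup>+z. g z \<partial>K t \<partial>?PN)"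
    by (rule nn_integral_bind[OF g Km'])
  also have "\<dots> = (\<integral>\<^sup>+t. \<integral>\<^sup>+x. g (t, x) \<partial>\<kappa> t \<partial>?PN)"
  proof (rule nn_integral_cong)
    fix t
    interpret kt: prob_space "\<kappa> t" by (rule K1)
    have gk: "g \<in> borel_measurable (return borel t \<Otimes>\<^sub>M \<kappa> t)"
      unfolding measurable_cong_sets[OF sets_pair_measure_cong[OF sets_return[of borel t] K1(2)[of t]] refl] by (rule g)
    have gk2: "g \<in> borel_measurable (borel \<Otimes>\<^sub>M \<kappa> t)"
      unfolding measurable_cong_sets[OF sets_pair_measure_cong[OF refl K1(2)[of t]] refl] by (rule g)
    have "(\<integral>\<^sup>+z. g z \<partial>K t) = (\<integral>\<^sup>+s. \<integral>\<^sup>+y. g (s, y) \<partial>\<kappa> t \<partial>return borel t)"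
      unfolding K_def by (rule kt.nn_integral_fst[symmetric, OF gk])
    also have "\<dots> = (\<integral>\<^sup>+y. g (t, y) \<partial>\<kappa> t)"
      by (rule nn_integral_return) (auto intro: kt.borel_measurable_nn_integral_fst[OF gk2])
    finally show "(\<integral>\<^sup>+z. g z \<partial>K t) = (\<integral>\<^sup>+x. g (t, x) \<partial>\<kappa> t)" .
  qed
  finally show ?thesis .
qed


lemma prod_indicator_ennreal:
  "finite I \<Longrightarrow> (\<Prod>i\<in>I. (indicator (A i) (f i) :: ennreal)) = (if \<forall>i\<in>I. f i \<in> A i then 1 else 0)"
proof (cases "\<forall>i\<in>I. f i \<in> A i")
  case True then show ?thesis by simp
next
  case False
  assume fin: "finite I"
  then obtain i where "i \<in> I" "f i \<notin> A i" using False by auto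
  then show ?thesis using False fin by (subst prod_zero) (auto intro!: bexI[of _ i])
qed

context ctx begin

definition Fr :: "real \<Rightarrow> real" where "Fr t = measure P {x. N x \<le> t}"
definition Lt :: "real \<Rightarrow> (nat \<Rightarrow> 'a) set" where "Lt t = {ys. \<forall>i<n-1. N (ys i) \<le> t}"
abbreviation "TL t \<equiv> PiM {..<n-1} (\<lambda>_. trunc_law P N t)"

lemma PPs: "product_prob_space (\<lambda>_. P)"
  unfolding product_prob_space_def product_sigma_finite_def product_prob_space_axioms_def
  using PP prob_space_imp_sigma_finite by blast

lemma setN[measurable]: "{x. N x \<le> t} \<in> sets P"
  using sP by simp

lemma Fe: "emeasure P {x. N x \<le> t} = ennreal (Fr t)"
proof -
  interpret Pp: prob_space P by (rule PP)
  show ?thesis unfolding Fr_def by (rule Pp.emeasure_eq_measure)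
qed

lemma Fr_nonneg: "0 \<le> Fr t" unfolding Fr_def by simp

lemma Fr_mono: "mono Fr"
proof -
  interpret Pp: prob_space P by (rule PP)
  show ?thesis unfolding mono_def Fr_def
    by (auto intro!: Pp.finite_measure_mono simp: sP)
qed

lemma Fr_meas[measurable]: "Fr \<in> borel_measurable borel"
  by (rule borel_measurable_mono[OF Fr_mono])

lemma space_PPm: "space PPm = PiE {..<n-1} (\<lambda>_. UNIV)"
  by (simp add: space_PiM)

lemma PPm_Lt: "emeasure PPm (Lt t \<inter> space PPm) = ennreal (Fr t) ^ (n-1)"
proof -
  interpret PPi: product_prob_space "\<lambda>_. P" "{..<n-1}" by (rule PPs)
  have "Lt t \<inter> space PPm = PiE {..<n-1} (\<lambda>_. {x. N x \<le> t})"
    unfolding space_PPm Lt_def by (auto simp: PiE_def Pi_def)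
  then have "emeasure PPm (Lt t \<inter> space PPm) = (\<Prod>i\<in>{..<n-1}. emeasure P {x. N x \<le> t})"
    by (simp add: PPi.emeasure_PiM)
  then show ?thesis by (simp add: Fe)
qed

lemma Lt_sets[measurable]: "Lt t \<inter> space PPm \<in> sets PPm"
proof -
  have "Lt t \<inter> space PPm = PiE {..<n-1} (\<lambda>_. {x. N x \<le> t})"
    unfolding space_PPm Lt_def by (auto simp: PiE_def Pi_def)
  then show ?thesis by (auto intro!: sets_PiM_I_finite)
qed

lemma trunc_pos: "Fr t > 0 \<Longrightarrow> trunc_law P N t = density P (\<lambda>x. ennreal (indicator {x. N x \<le> t} x / Fr t))"
  unfolding trunc_law_def Fr_def by simp

lemma trunc_zero: "\<not> Fr t > 0 \<Longrightarrow> trunc_law P N t = P"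
  unfolding trunc_law_def Fr_def by simp

lemma trunc_sets: "sets (trunc_law P N t) = sets borel"
  by (cases "Fr t > 0") (auto simp: trunc_pos trunc_zero sP)

lemma trunc_emeasure:
  assumes pos: "Fr t > 0" and S: "S \<in> sets P"
  shows "emeasure (trunc_law P N t) S = ennreal (1 / Fr t) * emeasure P (S \<inter> {x. N x \<le> t})"
proof -
  have "emeasure (trunc_law P N t) S = (\<integral>\<^sup>+x. ennreal (indicator {x. N x \<le> t} x / Fr t) * indicator S x \<partial>P)"
    unfolding trunc_pos[OF pos] by (rule emeasure_density) (use S in auto)
  also have "\<dots> = (\<integral>\<^sup>+x. ennreal (1 / Fr t) * indicator (S \<inter> {x. N x \<le> t}) x \<partial>P)"
    by (intro nn_integral_cong) (auto simp: indicator_def)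
  also have "\<dots> = ennreal (1 / Fr t) * emeasure P (S \<inter> {x. N x \<le> t})"
    by (rule nn_integral_cmult_indicator) (use S in auto)
  finally show ?thesis .
qed

lemma trunc_prob: "prob_space (trunc_law P N t)"
proof (cases "Fr t > 0")
  case True
  show ?thesis
  proof (rule prob_spaceI)
    have sp: "space (trunc_law P N t) = UNIV" unfolding trunc_pos[OF True] by simp
    have "emeasure (trunc_law P N t) UNIV = ennreal (1 / Fr t) * emeasure P {x. N x \<le> t}"
      using trunc_emeasure[OF True, of UNIV] by simp
    also have "\<dots> = ennreal (1 / Fr t * Fr t)" unfolding Fe using Fr_nonneg by (subst ennreal_mult) auto
    also have "\<dots> = 1" using True by simp
    finally show "emeasure (trunc_law P N t) (space (trunc_law P N t)) = 1" unfolding sp .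
  qed
next
  case False then show ?thesis by (simp add: trunc_zero PP)
qed

lemma TL_sets[measurable_cong]: "sets (TL t) = sets PM"
  using trunc_sets by (simp cong: sets_PiM_cong)

lemma TL_density:
  assumes pos: "Fr t > 0"
  shows "TL t = density PPm (\<lambda>ys. \<Prod>i\<in>{..<n-1}. ennreal (indicator {x. N x \<le> t} (ys i) / Fr t))"
proof -
  interpret TP: product_prob_space "\<lambda>_. trunc_law P N t" "{..<n-1}"
    unfolding product_prob_space_def product_sigma_finite_def product_prob_space_axioms_def
    using trunc_prob prob_space_imp_sigma_finite by blast
  interpret PPi: product_prob_space "\<lambda>_. P" "{..<n-1}" by (rule PPs)
  let ?h = "\<lambda>ys. \<Prod>i\<in>{..<n-1}. ennreal (indicator {x. N x \<le> t} (ys i) / Fr t)"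
  have hm: "?h \<in> borel_measurable PPm"
  proof (rule borel_measurable_prod_ennreal)
    fix i assume i: "i \<in> {..<n-1}"
    have "(\<lambda>ys. ys i) \<in> PPm \<rightarrow>\<^sub>M P" by (rule measurable_component_singleton) (use i in auto)
    then show "(\<lambda>ys. ennreal (indicator {x. N x \<le> t} (ys i) / Fr t)) \<in> borel_measurable PPm"
      by measurable
  qed
  show ?thesis
  proof (rule TP.PiM_eqI[symmetric])
    show "finite {..<n-1}" by simp
    show "sets (density PPm ?h) = sets (TL t)" using TL_sets PPm_sets by simp
    fix C assume C: "\<And>i. i \<in> {..<n-1} \<Longrightarrow> C i \<in> sets (trunc_law P N t)"
    have CP: "C i \<in> sets P" if "i \<in> {..<n-1}" for i using C[OF that] trunc_sets sP by simp
    have "emeasure (density PPm ?h) (PiE {..<n-1} C) = (\<integral>\<^sup>+ys. ?h ys * indicator (PiE {..<n-1} C) ys \<partial>PPm)"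
      by (rule emeasure_density[OF hm]) (use CP in \<open>auto intro!: sets_PiM_I_finite\<close>)
    also have "\<dots> = (\<integral>\<^sup>+ys. (\<Prod>i\<in>{..<n-1}. ennreal (indicator {x. N x \<le> t} (ys i) / Fr t) * indicator (C i) (ys i)) \<partial>PPm)"
    proof (rule nn_integral_cong)
      fix ys assume ys: "ys \<in> space PPm"
      have "indicator (PiE {..<n-1} C) ys = (\<Prod>i\<in>{..<n-1}. (indicator (C i) (ys i) :: ennreal))"
        using ys by (subst prod_indicator_ennreal) (auto simp: space_PiM PiE_def Pi_def indicator_def)
      then show "?h ys * indicator (PiE {..<n-1} C) ys = (\<Prod>i\<in>{..<n-1}. ennreal (indicator {x. N x \<le> t} (ys i) / Fr t) * indicator (C i) (ys i))"
        by (simp add: prod.distrib)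
    qed
    also have "\<dots> = (\<Prod>i\<in>{..<n-1}. \<integral>\<^sup>+x. ennreal (indicator {x. N x \<le> t} x / Fr t) * indicator (C i) x \<partial>P)"
      by (rule PPi.product_nn_integral_prod) (use CP in auto)
    also have "\<dots> = (\<Prod>i\<in>{..<n-1}. emeasure (trunc_law P N t) (C i))"
    proof (rule prod.cong[OF refl])
      fix i assume i: "i \<in> {..<n-1}"
      show "(\<integral>\<^sup>+x. ennreal (indicator {x. N x \<le> t} x / Fr t) * indicator (C i) x \<partial>P) = emeasure (trunc_law P N t) (C i)"
        unfolding trunc_pos[OF pos] by (rule emeasure_density[symmetric]) (use CP i in auto)
    qed
    finally show "emeasure (density PPm ?h) (PiE {..<n-1} C) = (\<Prod>i\<in>{..<n-1}. emeasure (trunc_law P N t) (C i))" .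
  qed
qed

lemma TR:
  assumes S: "S \<in> sets PM"
  shows "emeasure PPm (S \<inter> Lt t) = ennreal (Fr t) ^ (n-1) * emeasure (TL t) S"
proof (cases "Fr t > 0")
  case pos: True
  have SP: "S \<in> sets PPm" using S PPm_sets by simp
  have Ssp: "S \<subseteq> space PPm" using sets.sets_into_space[OF SP] .
  have SL: "S \<inter> Lt t = S \<inter> (Lt t \<inter> space PPm)" using Ssp by auto
  have SLs: "S \<inter> Lt t \<in> sets PPm" unfolding SL using SP Lt_sets by auto
  let ?h = "\<lambda>ys. \<Prod>i\<in>{..<n-1}. ennreal (indicator {x. N x \<le> t} (ys i) / Fr t)"
  have hm: "?h \<in> borel_measurable PPm"
  proof (rule borel_measurable_prod_ennreal)
    fix i assume i: "i \<in> {..<n-1}"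
    have "(\<lambda>ys. ys i) \<in> PPm \<rightarrow>\<^sub>M P" by (rule measurable_component_singleton) (use i in auto)
    then show "(\<lambda>ys. ennreal (indicator {x. N x \<le> t} (ys i) / Fr t)) \<in> borel_measurable PPm"
      by measurable
  qed
  have "emeasure (TL t) S = (\<integral>\<^sup>+ys. ?h ys * indicator S ys \<partial>PPm)"
    unfolding TL_density[OF pos] by (rule emeasure_density[OF hm SP])
  also have "\<dots> = (\<integral>\<^sup>+ys. ennreal (1 / Fr t) ^ (n-1) * indicator (S \<inter> Lt t) ys \<partial>PPm)"
  proof (rule nn_integral_cong)
    fix ys
    have "?h ys = (\<Prod>i\<in>{..<n-1}. ennreal (1 / Fr t) * indicator {x. N x \<le> t} (ys i))"
      by (intro prod.cong refl) (auto simp: indicator_def)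
    also have "\<dots> = ennreal (1 / Fr t) ^ (n-1) * (\<Prod>i\<in>{..<n-1}. (indicator {x. N x \<le> t} (ys i) :: ennreal))"
      by (simp add: prod.distrib)
    also have "(\<Prod>i\<in>{..<n-1}. (indicator {x. N x \<le> t} (ys i) :: ennreal)) = indicator (Lt t) ys"
      by (subst prod_indicator_ennreal) (auto simp: Lt_def indicator_def)
    finally have h: "?h ys = ennreal (1 / Fr t) ^ (n-1) * indicator (Lt t) ys" .
    show "?h ys * indicator S ys = ennreal (1 / Fr t) ^ (n-1) * indicator (S \<inter> Lt t) ys"
      unfolding h by (cases "ys \<in> S"; cases "ys \<in> Lt t") (simp_all add: indicator_def)
  qed
  also have "\<dots> = ennreal (1 / Fr t) ^ (n-1) * emeasure PPm (S \<inter> Lt t)"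
    by (rule nn_integral_cmult_indicator[OF SLs])
  finally have "ennreal (Fr t) ^ (n-1) * emeasure (TL t) S = (ennreal (Fr t) * ennreal (1 / Fr t)) ^ (n-1) * emeasure PPm (S \<inter> Lt t)"
    by (simp add: power_mult_distrib mult.assoc)
  also have "ennreal (Fr t) * ennreal (1 / Fr t) = 1"
    using pos by (simp add: ennreal_mult[symmetric] Fr_nonneg)
  finally show ?thesis by simp
next
  case False
  then have TLP: "TL t = PPm" by (simp add: trunc_zero)
  show ?thesis
  proof (cases "n - 1 = 0")
    case True
    then have "Lt t = UNIV" by (simp add: Lt_def)
    then show ?thesis using True TLP by simp
  next
    case m: False
    have "Fr t = 0" using False Fr_nonneg[of t] by (simp add: not_less)
    then have rhs: "ennreal (Fr t) ^ (n-1) = 0" using m by simp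
    have SP: "S \<in> sets PPm" using S PPm_sets by simp
    have "emeasure PPm (S \<inter> Lt t) \<le> emeasure PPm (Lt t \<inter> space PPm)"
      by (rule emeasure_mono) (use sets.sets_into_space[OF SP] Lt_sets in auto)
    also have "\<dots> = 0" using PPm_Lt rhs by simp
    finally show ?thesis using rhs by simp
  qed
qed

end

locale ctx2 = ctx M X P N n for M :: "'o measure" and X :: "nat \<Rightarrow> 'o \<Rightarrow> 'a::euclidean_space" and P N n +
  fixes \<kappa> :: "real \<Rightarrow> 'a measure"
  assumes rcd: "is_rcd P (\<lambda>x. x) borel N borel \<kappa>"
begin

lemma K1: "prob_space (\<kappa> t)" "sets (\<kappa> t) = sets borel"
  using rcd unfolding is_rcd_def by auto

lemma \<kappa>m: "\<kappa> \<in> borel \<rightarrow>\<^sub>M subprob_algebra borel"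
  using rcd unfolding is_rcd_def
  by (intro measurable_subprob_algebra) (auto simp: prob_space_imp_subprob_space)

definition Q :: "real \<Rightarrow> (nat \<Rightarrow> 'a) measure" where
  "Q t = distr (TL t) PM (ostat N (n-1))"

definition K :: "real \<Rightarrow> ((nat \<Rightarrow> 'a) \<times> 'a) measure" where
  "K t = Q t \<Otimes>\<^sub>M \<kappa> t"

lemma TL_prob: "prob_space (TL t)"
  by (intro prob_space_PiM trunc_prob)

lemma ostat_TL: "ostat N (n-1) \<in> TL t \<rightarrow>\<^sub>M PM"
  unfolding measurable_cong_sets[OF TL_sets refl] by (rule measurable_ostat[OF Nm])

lemma Q_prob: "prob_space (Q t)"
  unfolding Q_def by (rule prob_space.prob_space_distr[OF TL_prob ostat_TL])

lemma Q_sets: "sets (Q t) = sets PM"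
  unfolding Q_def by simp

lemma K_prob: "prob_space (K t)"
proof -
  interpret q: prob_space "Q t" by (rule Q_prob)
  interpret k: prob_space "\<kappa> t" by (rule K1)
  interpret pair_prob_space "Q t" "\<kappa> t" ..
  show ?thesis unfolding K_def by (rule P.prob_space_axioms)
qed

lemma K_sets: "sets (K t) = sets (PM \<Otimes>\<^sub>M borel)"
  unfolding K_def by (rule sets_pair_measure_cong[OF Q_sets K1(2)])

definition Sx :: "'a \<Rightarrow> ((nat \<Rightarrow> 'a) \<times> 'a) set \<Rightarrow> (nat \<Rightarrow> 'a) set" where
  "Sx x A = {ys \<in> space PM. (ostat N (n-1) ys, x) \<in> A}"

lemma space_PM_PPm: "space PPm = space PM"
  by (rule sets_eq_imp_space_eq[OF PPm_sets])

lemma Sx_sets: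
  assumes A: "A \<in> sets (PM \<Otimes>\<^sub>M borel)"
  shows "Sx x A \<in> sets PM"
proof -
  have "(\<lambda>ys. (ostat N (n-1) ys, x)) \<in> PM \<rightarrow>\<^sub>M PM \<Otimes>\<^sub>M borel"
    by (intro measurable_Pair measurable_ostat[OF Nm] measurable_const) auto
  from measurable_sets[OF this A] show ?thesis unfolding Sx_def by (simp add: vimage_def Int_def conj_commute)
qed

lemma K_formula:
  assumes A: "A \<in> sets (PM \<Otimes>\<^sub>M borel)"
  shows "emeasure (K t) A = (\<integral>\<^sup>+x. emeasure (TL t) (Sx x A) \<partial>\<kappa> t)"
proof -
  interpret q: prob_space "Q t" by (rule Q_prob)
  interpret k: prob_space "\<kappa> t" by (rule K1)
  interpret pair_prob_space "Q t" "\<kappa> t" ..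
  have A': "A \<in> sets (Q t \<Otimes>\<^sub>M \<kappa> t)" using A by (simp add: sets_pair_measure_cong[OF Q_sets K1(2)])
  have "emeasure (K t) A = (\<integral>\<^sup>+x. emeasure (Q t) ((\<lambda>zs. (zs, x)) -` A) \<partial>\<kappa> t)"
    unfolding K_def by (rule emeasure_pair_measure_alt2[OF A'])
  also have "\<dots> = (\<integral>\<^sup>+x. emeasure (TL t) (Sx x A) \<partial>\<kappa> t)"
  proof (rule nn_integral_cong)
    fix x
    have sec: "(\<lambda>zs. (zs, x)) -` A \<in> sets PM" using sets_Pair2[OF A] .
    have "emeasure (Q t) ((\<lambda>zs. (zs, x)) -` A) = emeasure (TL t) (ostat N (n-1) -` ((\<lambda>zs. (zs, x)) -` A) \<inter> space (TL t))"
      unfolding Q_def by (rule emeasure_distr[OF ostat_TL sec])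
    also have "ostat N (n-1) -` ((\<lambda>zs. (zs, x)) -` A) \<inter> space (TL t) = Sx x A"
      unfolding Sx_def using sets_eq_imp_space_eq[OF TL_sets] by auto
    finally show "emeasure (Q t) ((\<lambda>zs. (zs, x)) -` A) = emeasure (TL t) (Sx x A)" .
  qed
  finally show ?thesis .
qed

lemma pred_Lt:
  assumes f: "f \<in> L \<rightarrow>\<^sub>M PM" and g: "g \<in> borel_measurable L"
  shows "{z \<in> space L. f z \<in> Lt (g z)} \<in> sets L"
proof (cases "n - 1 = 0")
  case True
  then show ?thesis by (simp add: Lt_def)
next
  case False
  have "{z \<in> space L. f z \<in> Lt (g z)} = (\<Inter>i\<in>{..<n-1}. {z \<in> space L. N (f z i) \<le> g z})"
    using False apply (auto simp: Lt_def)
    subgoal premises p for z using p(2)[rule_format, of 0] p(1) by (auto simp: lessThan_empty_iff)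
    done
  also have "\<dots> \<in> sets L"
  proof (rule sets.finite_INT)
    fix i assume i: "i \<in> {..<n-1}"
    have "(\<lambda>z. N (f z i)) \<in> borel_measurable L"
      by (rule measurable_compose[OF f measurable_compose[OF measurable_component_singleton[of i "{..<n-1}" "\<lambda>_. borel"] Nm]]) (use i in auto)
    then show "{z \<in> space L. N (f z i) \<le> g z} \<in> sets L"
      using g by (rule borel_measurable_le)
  qed (use False in \<open>auto simp: lessThan_empty_iff\<close>)
  finally show ?thesis .
qed

definition rho :: "((nat \<Rightarrow> 'a) \<times> 'a) set \<Rightarrow> real \<Rightarrow> 'a \<Rightarrow> ennreal" where
  "rho A t x = (if 0 < Fr t then ennreal (1 / Fr t) ^ (n-1) * emeasure PPm (Sx x A \<inter> Lt t) else emeasure PPm (Sx x A))"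

lemma rho_eq:
  assumes A: "A \<in> sets (PM \<Otimes>\<^sub>M borel)"
  shows "emeasure (TL t) (Sx x A) = rho A t x"
proof (cases "0 < Fr t")
  case True
  have "ennreal (1 / Fr t) ^ (n-1) * emeasure PPm (Sx x A \<inter> Lt t)
      = (ennreal (1 / Fr t) * ennreal (Fr t)) ^ (n-1) * emeasure (TL t) (Sx x A)"
    unfolding TR[OF Sx_sets[OF A]] by (simp add: power_mult_distrib mult.assoc)
  also have "ennreal (1 / Fr t) * ennreal (Fr t) = 1"
    using True by (simp add: ennreal_mult[symmetric] Fr_nonneg)
  finally show ?thesis using True by (simp add: rho_def)
next
  case False
  then show ?thesis by (simp add: rho_def trunc_zero)
qed

lemma snd_PPm: "snd \<in> (borel \<Otimes>\<^sub>M borel) \<Otimes>\<^sub>M PPm \<rightarrow>\<^sub>M PM"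
  unfolding measurable_cong_sets[OF sets_pair_measure_cong[OF refl PPm_sets] refl] by simp

lemma emeasure_Sx_meas:
  assumes A: "A \<in> sets (PM \<Otimes>\<^sub>M borel)"
  shows "(\<lambda>p. emeasure PPm (Sx (snd p) A \<inter> Lt (fst p))) \<in> borel_measurable (borel \<Otimes>\<^sub>M borel)"
    and "(\<lambda>p. emeasure PPm (Sx (snd p) A)) \<in> borel_measurable (borel \<Otimes>\<^sub>M borel)"
proof -
  interpret PPi: prob_space PPm by (intro prob_space_PiM PP)
  let ?L = "(borel \<Otimes>\<^sub>M borel) \<Otimes>\<^sub>M PPm"
  have h: "(\<lambda>w. (ostat N (n-1) (snd w), snd (fst w))) \<in> ?L \<rightarrow>\<^sub>M PM \<Otimes>\<^sub>M borel"
    by (intro measurable_Pair measurable_compose[OF snd_PPm measurable_ostat[OF Nm]]) auto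
  have S1: "{w \<in> space ?L. (ostat N (n-1) (snd w), snd (fst w)) \<in> A} \<in> sets ?L"
    using measurable_sets[OF h A] by (simp add: vimage_def Int_def conj_commute)
  have S2: "{w \<in> space ?L. snd w \<in> Lt (fst (fst w))} \<in> sets ?L"
    by (rule pred_Lt[OF snd_PPm]) simp
  have sp: "space PPm = space PM" by (rule space_PM_PPm)
  show "(\<lambda>p. emeasure PPm (Sx (snd p) A \<inter> Lt (fst p))) \<in> borel_measurable (borel \<Otimes>\<^sub>M borel)"
  proof -
    let ?Q = "{w \<in> space ?L. (ostat N (n-1) (snd w), snd (fst w)) \<in> A} \<inter> {w \<in> space ?L. snd w \<in> Lt (fst (fst w))}"
    have m: "(\<lambda>p. emeasure PPm (Pair p -` ?Q)) \<in> borel_measurable (borel \<Otimes>\<^sub>M borel)"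
      by (rule PPi.measurable_emeasure_Pair) (use S1 S2 in auto)
    have eq: "Pair p -` ?Q = Sx (snd p) A \<inter> Lt (fst p)" for p
      unfolding Sx_def using sp by (auto simp: space_pair_measure)
    show ?thesis using m unfolding eq .
  qed
  show "(\<lambda>p. emeasure PPm (Sx (snd p) A)) \<in> borel_measurable (borel \<Otimes>\<^sub>M borel)"
  proof -
    let ?Q = "{w \<in> space ?L. (ostat N (n-1) (snd w), snd (fst w)) \<in> A}"
    have m: "(\<lambda>p. emeasure PPm (Pair p -` ?Q)) \<in> borel_measurable (borel \<Otimes>\<^sub>M borel)"
      by (rule PPi.measurable_emeasure_Pair) (use S1 in auto)
    have eq: "Pair p -` ?Q = Sx (snd p) A" for p
      unfolding Sx_def using sp by (auto simp: space_pair_measure)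
    show ?thesis using m unfolding eq .
  qed
qed

lemma rho_meas:
  assumes A: "A \<in> sets (PM \<Otimes>\<^sub>M borel)"
  shows "(\<lambda>(t, x). rho A t x) \<in> borel_measurable (borel \<Otimes>\<^sub>M borel)"
proof -
  note emeasure_Sx_meas[OF A, measurable]
  have "(\<lambda>p. if 0 < Fr (fst p) then ennreal (1 / Fr (fst p)) ^ (n-1) * emeasure PPm (Sx (snd p) A \<inter> Lt (fst p))
      else emeasure PPm (Sx (snd p) A)) \<in> borel_measurable (borel \<Otimes>\<^sub>M borel)"
    by measurable
  then show ?thesis unfolding rho_def by (simp add: case_prod_beta')
qed

lemma K_meas:
  assumes A: "A \<in> sets (PM \<Otimes>\<^sub>M borel)"
  shows "(\<lambda>t. emeasure (K t) A) \<in> borel_measurable borel"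
proof -
  have "(\<lambda>t. \<integral>\<^sup>+x. rho A t x \<partial>\<kappa> t) \<in> borel_measurable borel"
    by (rule nn_integral_measurable_subprob_algebra2[OF rho_meas[OF A] \<kappa>m])
  moreover have "emeasure (K t) A = (\<integral>\<^sup>+x. rho A t x \<partial>\<kappa> t)" for t
    unfolding K_formula[OF A] rho_eq[OF A] ..
  ultimately show ?thesis by simp
qed

end

context ctx2 begin

lemma NP: "N \<in> P \<rightarrow>\<^sub>M borel"
  unfolding measurable_cong_sets[OF sP refl] by (rule Nm)

lemma G_PPm:
  assumes f: "f \<in> borel_measurable (PM \<Otimes>\<^sub>M borel)"
  shows "G f \<in> borel_measurable (PPm \<Otimes>\<^sub>M P)"
  unfolding measurable_cong_sets[OF sets_pair_measure_cong[OF PPm_sets sP] refl] by (rule G_meas[OF f])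

lemma SxLt_sets:
  assumes A: "A \<in> sets (PM \<Otimes>\<^sub>M borel)"
  shows "Sx x A \<inter> Lt t \<in> sets PPm"
proof -
  have SP: "Sx x A \<in> sets PPm" using Sx_sets[OF A] PPm_sets by simp
  have "Sx x A \<inter> Lt t = Sx x A \<inter> (Lt t \<inter> space PPm)" using sets.sets_into_space[OF SP] by auto
  then show ?thesis using SP Lt_sets by auto
qed

lemma fubini_G:
  assumes f: "f \<in> borel_measurable (PM \<Otimes>\<^sub>M borel)"
  shows "(\<integral>\<^sup>+z. G f z \<partial>(PPm \<Otimes>\<^sub>M P)) = (\<integral>\<^sup>+x. \<integral>\<^sup>+ys. G f (ys, x) \<partial>PPm \<partial>P)"
proof -
  interpret PPi: prob_space PPm by (intro prob_space_PiM PP)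
  interpret Pp: prob_space P by (rule PP)
  interpret pair_sigma_finite PPm P ..
  show ?thesis by (rule nn_integral_snd[symmetric, OF G_PPm[OF f]])
qed

lemma main_eq:
  assumes A: "A \<in> sets (PM \<Otimes>\<^sub>M borel)" and B: "B \<in> sets (borel :: real measure)"
  shows "emeasure M {\<omega>\<in>space M. Z \<omega> \<in> A \<and> N (snd (Z \<omega>)) \<in> B}
    = (\<integral>\<^sup>+t. indicator B t * emeasure (K t) A \<partial>distr M borel (\<lambda>\<omega>. N (snd (Z \<omega>))))"
proof -
  note A[measurable] B[measurable]
  note Km[measurable] = K_meas[OF A]
  define f1 :: "(nat \<Rightarrow> 'a) \<times> 'a \<Rightarrow> ennreal" where "f1 z = indicator A z * indicator B (N (snd z))" for z
  define f2 where "f2 z = indicator B (N (snd z)) * emeasure (K (N (snd z))) A" for z :: "(nat \<Rightarrow> 'a) \<times> 'a"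
  define \<Phi>1 :: "real \<times> 'a \<Rightarrow> ennreal" where "\<Phi>1 p = indicator B (fst p) * emeasure PPm (Sx (snd p) A \<inter> Lt (fst p))" for p
  define \<Phi>2 :: "real \<Rightarrow> ennreal" where "\<Phi>2 t = indicator B t * emeasure (K t) A * ennreal (Fr t) ^ (n-1)" for t
  have f1m: "f1 \<in> borel_measurable (PM \<Otimes>\<^sub>M borel)" unfolding f1_def by measurable
  have f2m: "f2 \<in> borel_measurable (PM \<Otimes>\<^sub>M borel)" unfolding f2_def by measurable
  have \<Phi>1m: "\<Phi>1 \<in> borel_measurable (borel \<Otimes>\<^sub>M borel)"
    unfolding \<Phi>1_def using emeasure_Sx_meas(1)[OF A] by measurable
  have \<Phi>2m: "\<Phi>2 \<in> borel_measurable borel" unfolding \<Phi>2_def by measurable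
  have Tm: "(\<lambda>\<omega>. N (snd (Z \<omega>))) \<in> borel_measurable M" by measurable
  have "emeasure M {\<omega>\<in>space M. Z \<omega> \<in> A \<and> N (snd (Z \<omega>)) \<in> B} = (\<integral>\<^sup>+\<omega>. f1 (Z \<omega>) \<partial>M)"
  proof -
    have S: "{\<omega>\<in>space M. Z \<omega> \<in> A \<and> N (snd (Z \<omega>)) \<in> B} \<in> sets M" by measurable
    have "emeasure M {\<omega>\<in>space M. Z \<omega> \<in> A \<and> N (snd (Z \<omega>)) \<in> B} = (\<integral>\<^sup>+\<omega>. indicator {\<omega>\<in>space M. Z \<omega> \<in> A \<and> N (snd (Z \<omega>)) \<in> B} \<omega> \<partial>M)"
      by (rule nn_integral_indicator[OF S, symmetric])
    also have "\<dots> = (\<integral>\<^sup>+\<omega>. f1 (Z \<omega>) \<partial>M)"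
      by (rule nn_integral_cong) (auto simp: f1_def indicator_def)
    finally show ?thesis .
  qed
  also have "\<dots> = of_nat n * (\<integral>\<^sup>+x. \<integral>\<^sup>+ys. G f1 (ys, x) \<partial>PPm \<partial>P)"
    unfolding decomp[OF f1m] fubini_G[OF f1m] ..
  also have "(\<integral>\<^sup>+x. \<integral>\<^sup>+ys. G f1 (ys, x) \<partial>PPm \<partial>P) = (\<integral>\<^sup>+x. \<Phi>1 (N x, x) \<partial>P)"
  proof (rule nn_integral_cong)
    fix x
    have "(\<integral>\<^sup>+ys. G f1 (ys, x) \<partial>PPm) = (\<integral>\<^sup>+ys. indicator B (N x) * indicator (Sx x A \<inter> Lt (N x)) ys \<partial>PPm)"
    proof (rule nn_integral_cong)
      fix ys assume ys: "ys \<in> space PPm"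
      then have "ys \<in> space PM" using space_PM_PPm by simp
      then show "G f1 (ys, x) = indicator B (N x) * indicator (Sx x A \<inter> Lt (N x)) ys"
        unfolding G_def f1_def Sx_def Lset_def Lt_def by (auto simp: indicator_def)
    qed
    also have "\<dots> = \<Phi>1 (N x, x)"
      unfolding \<Phi>1_def fst_conv snd_conv by (rule nn_integral_cmult_indicator[OF SxLt_sets[OF A]])
    finally show "(\<integral>\<^sup>+ys. G f1 (ys, x) \<partial>PPm) = \<Phi>1 (N x, x)" .
  qed
  also have "(\<integral>\<^sup>+x. \<Phi>1 (N x, x) \<partial>P) = (\<integral>\<^sup>+t. \<integral>\<^sup>+x. \<Phi>1 (t, x) \<partial>\<kappa> t \<partial>distr P borel N)"
    by (rule disint[OF PP sP Nm rcd \<Phi>1m])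
  also have "\<dots> = (\<integral>\<^sup>+t. \<Phi>2 t \<partial>distr P borel N)"
  proof (rule nn_integral_cong)
    fix t
    have rm: "(\<lambda>x. rho A t x) \<in> borel_measurable (\<kappa> t)"
    proof -
      have "(\<lambda>x. (\<lambda>(t, x). rho A t x) (Pair t x)) \<in> borel_measurable borel"
        by (rule measurable_compose[OF measurable_Pair1'[of t borel borel] rho_meas[OF A]]) simp
      then show ?thesis unfolding measurable_cong_sets[OF K1(2) refl] by simp
    qed
    have "(\<integral>\<^sup>+x. \<Phi>1 (t, x) \<partial>\<kappa> t) = (\<integral>\<^sup>+x. (indicator B t * ennreal (Fr t) ^ (n-1)) * rho A t x \<partial>\<kappa> t)"
      unfolding \<Phi>1_def fst_conv snd_conv TR[OF Sx_sets[OF A]] rho_eq[OF A] by (simp add: mult.assoc)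
    also have "\<dots> = (indicator B t * ennreal (Fr t) ^ (n-1)) * (\<integral>\<^sup>+x. rho A t x \<partial>\<kappa> t)"
      by (rule nn_integral_cmult[OF rm])
    also have "(\<integral>\<^sup>+x. rho A t x \<partial>\<kappa> t) = emeasure (K t) A"
      unfolding K_formula[OF A] rho_eq[OF A] ..
    finally show "(\<integral>\<^sup>+x. \<Phi>1 (t, x) \<partial>\<kappa> t) = \<Phi>2 t" unfolding \<Phi>2_def by (simp add: ac_simps)
  qed
  also have "(\<integral>\<^sup>+t. \<Phi>2 t \<partial>distr P borel N) = (\<integral>\<^sup>+x. \<Phi>2 (N x) \<partial>P)"
    by (rule nn_integral_distr[OF NP]) (simp add: \<Phi>2m)
  also have "\<dots> = (\<integral>\<^sup>+x. \<integral>\<^sup>+ys. G f2 (ys, x) \<partial>PPm \<partial>P)"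
  proof (rule nn_integral_cong)
    fix x
    have "(\<integral>\<^sup>+ys. G f2 (ys, x) \<partial>PPm) = (\<integral>\<^sup>+ys. (indicator B (N x) * emeasure (K (N x)) A) * indicator (Lt (N x) \<inter> space PPm) ys \<partial>PPm)"
    proof (rule nn_integral_cong)
      fix ys assume ys: "ys \<in> space PPm"
      then show "G f2 (ys, x) = (indicator B (N x) * emeasure (K (N x)) A) * indicator (Lt (N x) \<inter> space PPm) ys"
        unfolding G_def f2_def Lset_def Lt_def by (auto simp: indicator_def)
    qed
    also have "\<dots> = \<Phi>2 (N x)"
      unfolding \<Phi>2_def nn_integral_cmult_indicator[OF Lt_sets] PPm_Lt ..
    finally show "\<Phi>2 (N x) = (\<integral>\<^sup>+ys. G f2 (ys, x) \<partial>PPm)" ..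
  qed
  also have "of_nat n * \<dots> = (\<integral>\<^sup>+\<omega>. f2 (Z \<omega>) \<partial>M)"
    unfolding decomp[OF f2m] fubini_G[OF f2m] ..
  also have "\<dots> = (\<integral>\<^sup>+t. indicator B t * emeasure (K t) A \<partial>distr M borel (\<lambda>\<omega>. N (snd (Z \<omega>))))"
  proof -
    have "(\<lambda>t. indicator B t * emeasure (K t) A) \<in> borel_measurable (distr M borel (\<lambda>\<omega>. N (snd (Z \<omega>))))"
      unfolding measurable_distr_eq1 by measurable
    then show ?thesis unfolding f2_def by (rule nn_integral_distr[OF Tm, symmetric])
  qed
  finally show ?thesis .
qed

end

theorem lemma2p2:
  fixes M :: "'o measure"
    and X :: "nat \<Rightarrow> 'o \<Rightarrow> real ^ 'd"
    and P :: "(real ^ 'd) measure"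
    and N :: "real ^ 'd \<Rightarrow> real"
    and n :: nat
    and \<kappa> :: "real \<Rightarrow> (real ^ 'd) measure"
  assumes "prob_space M"
    and "is_norm N"
    and "1 \<le> n"
    and "\<forall>i<n. X i \<in> borel_measurable M"
    and "prob_space.indep_vars M (\<lambda>_. borel) X {..<n}"
    and "\<forall>i<n. distr M borel (X i) = P"
    and "absolutely_continuous lborel (distr P borel N)"
    and "is_rcd P (\<lambda>x. x) borel N borel \<kappa>"
  shows "is_rcd M
           (\<lambda>\<omega>. (restrict (ostat N n (\<lambda>i. X i \<omega>)) {..<n - 1}, ostat N n (\<lambda>i. X i \<omega>) (n - 1)))
           (PiM {..<n - 1} (\<lambda>_. borel) \<Otimes>\<^sub>M borel)
           (\<lambda>\<omega>. N (ostat N n (\<lambda>i. X i \<omega>) (n - 1)))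
           borel
           (\<lambda>y. distr (PiM {..<n - 1} (\<lambda>_. trunc_law P N y)) (PiM {..<n - 1} (\<lambda>_. borel))
                      (ostat N (n - 1)) \<Otimes>\<^sub>M \<kappa> y)"
proof -
  interpret c: ctx2 M X P N n \<kappa>
    using assms by (auto simp: ctx2_def ctx_def ctx_axioms_def ctx2_axioms_def)
  have Zeq: "(\<lambda>\<omega>. (restrict (ostat N n (\<lambda>i. X i \<omega>)) {..<n - 1}, ostat N n (\<lambda>i. X i \<omega>) (n - 1))) = c.Z"
    by (simp add: fun_eq_iff c.Z_def)
  have Teq: "(\<lambda>\<omega>. N (ostat N n (\<lambda>i. X i \<omega>) (n - 1))) = (\<lambda>\<omega>. N (snd (c.Z \<omega>)))"
    by (simp add: fun_eq_iff c.Z_def)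
  have Keq: "(\<lambda>y. distr (PiM {..<n - 1} (\<lambda>_. trunc_law P N y)) (PiM {..<n - 1} (\<lambda>_. borel))
                      (ostat N (n - 1)) \<Otimes>\<^sub>M \<kappa> y) = c.K"
    by (simp add: fun_eq_iff c.K_def c.Q_def)
  show ?thesis
    unfolding is_rcd_def Zeq Teq Keq
  proof (intro conjI ballI)
    fix t show "prob_space (c.K t)" by (rule c.K_prob)
    fix t show "sets (c.K t) = sets (PiM {..<n - 1} (\<lambda>_. borel :: (real^'d) measure) \<Otimes>\<^sub>M (borel :: (real^'d) measure))" by (rule c.K_sets)
  next
    fix A assume "A \<in> sets (PiM {..<n - 1} (\<lambda>_. borel :: (real^'d) measure) \<Otimes>\<^sub>M (borel :: (real^'d) measure))"
    then show "(\<lambda>t. emeasure (c.K t) A) \<in> borel_measurable borel" by (rule c.K_meas)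
  next
    fix A B assume "A \<in> sets (PiM {..<n - 1} (\<lambda>_. borel :: (real^'d) measure) \<Otimes>\<^sub>M (borel :: (real^'d) measure))" "B \<in> sets (borel :: real measure)"
    then show "emeasure M {\<omega> \<in> space M. c.Z \<omega> \<in> A \<and> N (snd (c.Z \<omega>)) \<in> B} =
        (\<integral>\<^sup>+ t. indicator B t * emeasure (c.K t) A \<partial>distr M borel (\<lambda>\<omega>. N (snd (c.Z \<omega>))))"
      by (rule c.main_eq)
  qed
qed


end
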